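(* Let $\mathcal{A}^1_{+}$ (resp. $\mathcal{A}^1_{-}$) be the set of all $(a,b,c,d,e,f)\in\mathbb{R}^6$ such that the Ricci tensor of the Type $\mathcal{A}$ model $\mathcal{M}(a,b,c,d,e,f)$ has rank $1$ and is positive semi-definite (resp. negative semi-definite). Then each of $\mathcal{A}^1_{+}$ and $\mathcal{A}^1_{-}$ is a smooth submanifold of $\mathbb{R}^6$ diffeomorphic to $S^1\times S^1\times\mathbb{R}^3$.
   Context: For $(a,b,c,d,e,f)\in\mathbb{R}^6$, the Type $\mathcal{A}$ model $\mathcal{M}(a,b,c,d,e,f)$ is $(\mathbb{R}^2,\nabla)$ with torsion free connection whose constant Christoffel symbols ($\nabla_{\partial_{x^i}}\partial_{x^j}=\Gamma_{ij}{}^k\partial_{x^k}$) are $\Gamma_{11}{}^1=a$, $\Gamma_{11}{}^2=b$, $\Gamma_{12}{}^1=\Gamma_{21}{}^1=c$, $\Gamma_{12}{}^2=\Gamma_{21}{}^2=d$, $\Gamma_{22}{}^1=e$, $\Gamma_{22}{}^2=f$. Its Ricci tensor is the symmetric matrix $\rho=\begin{pmatrix}(a-d)d+b(f-c) & cd-be\\ cd-be & c(f-c)+(a-d)e\end{pmatrix}$. *)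

theory Defs
  imports "HOL-Analysis.Analysis"
begin

definition ricci :: "real \<Rightarrow> real \<Rightarrow> real \<Rightarrow> real \<Rightarrow> real \<Rightarrow> real \<Rightarrow> real^2^2" where
  "ricci a b c d e f = (\<chi> i j.
     if i = 1 \<and> j = 1 then (a - d) * d + b * (f - c)
     else if i = 2 \<and> j = 2 then c * (f - c) + (a - d) * e
     else c * d - b * e)"

definition psd :: "real^2^2 \<Rightarrow> bool" where
  "psd A \<longleftrightarrow> (\<forall>x. 0 \<le> x \<bullet> (A *v x))"

definition nsd :: "real^2^2 \<Rightarrow> bool" where
  "nsd A \<longleftrightarrow> (\<forall>x. x \<bullet> (A *v x) \<le> 0)"

type_synonym R6 = "real \<times> real \<times> real \<times> real \<times> real \<times> real"

definition A1plus :: "R6 set" where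
  "A1plus = {(a,b,c,d,e,f). rank (ricci a b c d e f) = 1 \<and> psd (ricci a b c d e f)}"

definition A1minus :: "R6 set" where
  "A1minus = {(a,b,c,d,e,f). rank (ricci a b c d e f) = 1 \<and> nsd (ricci a b c d e f)}"

fun Ck_on :: "nat \<Rightarrow> 'a::euclidean_space set \<Rightarrow> ('a \<Rightarrow> 'b::euclidean_space) \<Rightarrow> bool" where
  "Ck_on 0 U f = continuous_on U f"
| "Ck_on (Suc k) U f = ((\<forall>x\<in>U. f differentiable (at x)) \<and>
      (\<forall>v. Ck_on k U (\<lambda>x. frechet_derivative f (at x) v)))"

definition smooth_on :: "'a::euclidean_space set \<Rightarrow> ('a \<Rightarrow> 'b::euclidean_space) \<Rightarrow> bool" where
  "smooth_on U f \<longleftrightarrow> open U \<and> (\<forall>k. Ck_on k U f)"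

definition smooth_map_on :: "'a::euclidean_space set \<Rightarrow> ('a \<Rightarrow> 'b::euclidean_space) \<Rightarrow> bool" where
  "smooth_map_on S f \<longleftrightarrow> (\<forall>p\<in>S. \<exists>U F. open U \<and> p \<in> U \<and> smooth_on U F \<and> (\<forall>x\<in>S \<inter> U. F x = f x))"

definition diffeomorphic :: "'a::euclidean_space set \<Rightarrow> 'b::euclidean_space set \<Rightarrow> bool" where
  "diffeomorphic M N \<longleftrightarrow> (\<exists>f g. smooth_map_on M f \<and> smooth_map_on N g \<and>
      (\<forall>x\<in>M. f x \<in> N \<and> g (f x) = x) \<and> (\<forall>y\<in>N. g y \<in> M \<and> f (g y) = y))"

definition smooth_submanifold :: "'a::euclidean_space set \<Rightarrow> bool" where
  "smooth_submanifold M \<longleftrightarrow> (\<forall>p\<in>M. \<exists>U V (\<phi>::'a \<Rightarrow> 'a) \<psi> S.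
      open U \<and> p \<in> U \<and> open V \<and> subspace S \<and>
      smooth_on U \<phi> \<and> smooth_on V \<psi> \<and> \<phi> ` U = V \<and>
      (\<forall>x\<in>U. \<psi> (\<phi> x) = x) \<and> (\<forall>y\<in>V. \<phi> (\<psi> y) = y) \<and>
      \<phi> ` (M \<inter> U) = V \<inter> S)"

definition torus_times_R3 :: "(complex \<times> complex \<times> real \<times> real \<times> real) set" where
  "torus_times_R3 = sphere 0 1 \<times> sphere 0 1 \<times> UNIV"

end

theory Submission
  imports Defs
begin


lemma ricci_entries:
  "ricci a b c d e f $ 1 $ 1 = (a - d) * d + b * (f - c)"
  "ricci a b c d e f $ 2 $ 2 = c * (f - c) + (a - d) * e"
  "ricci a b c d e f $ 1 $ 2 = c * d - b * e"
  "ricci a b c d e f $ 2 $ 1 = c * d - b * e"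
  by (simp_all add: ricci_def)

lemma quad2: "x \<bullet> (A *v x) = A$1$1 * (x$1)^2 + (A$1$2 + A$2$1) * (x$1 * x$2) + A$2$2 * (x$2)^2"
  for A :: "real^2^2"
  by (simp add: inner_vec_def matrix_vector_mult_def sum_2 algebra_simps power2_eq_square)

lemma mat2_eq0: "(A::real^2^2) = 0 \<longleftrightarrow> A$1$1 = 0 \<and> A$1$2 = 0 \<and> A$2$1 = 0 \<and> A$2$2 = 0"
  by (auto simp: vec_eq_iff forall_2)

lemma rank1_iff: "rank (A::real^2^2) = 1 \<longleftrightarrow> A \<noteq> 0 \<and> det A = 0"
proof -
  have "rank A \<le> 2" using rank_bound[of A] by simp
  moreover have "det A = 0 \<longleftrightarrow> rank A < 2" using det_eq_0_rank[of A] by simp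
  moreover have "rank A = 0 \<longleftrightarrow> A = 0" by (rule rank_eq_0)
  ultimately show ?thesis by linarith
qed

definition tr6 :: "real \<Rightarrow> real \<Rightarrow> real \<Rightarrow> real \<Rightarrow> real \<Rightarrow> real \<Rightarrow> real" where
  "tr6 a b c d e f = (a - d) * d + b * (f - c) + (c * (f - c) + (a - d) * e)"
definition sg6 :: "real \<Rightarrow> real \<Rightarrow> real \<Rightarrow> real \<Rightarrow> real \<Rightarrow> real \<Rightarrow> real" where
  "sg6 a b c d e f = (a - d) * d + b * (f - c) - (c * (f - c) + (a - d) * e)"
definition kp6 :: "real \<Rightarrow> real \<Rightarrow> real \<Rightarrow> real \<Rightarrow> real \<Rightarrow> real \<Rightarrow> real" where
  "kp6 a b c d e f = 2 * (c * d - b * e)"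

lemma sym_psd_iff:
  fixes p q r s :: real and A :: "real^2^2"
  assumes "A$1$1 = p" "A$2$2 = r" "A$1$2 = q" "A$2$1 = q" "p*r = q^2"
  shows "(\<forall>x. s * (x \<bullet> (A *v x)) \<ge> 0) \<longleftrightarrow> s * p \<ge> 0 \<and> s * r \<ge> 0"
proof
  assume H: "\<forall>x. s * (x \<bullet> (A *v x)) \<ge> 0"
  have "s * p \<ge> 0" using H[rule_format, of "axis 1 1"] assms by (simp add: quad2 axis_def)
  moreover have "s * r \<ge> 0" using H[rule_format, of "axis 2 1"] assms by (simp add: quad2 axis_def)
  ultimately show "s * p \<ge> 0 \<and> s * r \<ge> 0" by simp
next
  assume H: "s * p \<ge> 0 \<and> s * r \<ge> 0"
  show "\<forall>x. s * (x \<bullet> (A *v x)) \<ge> 0"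
  proof
    fix x :: "real^2"
    have Q: "x \<bullet> (A *v x) = p * (x$1)^2 + 2*q * (x$1 * x$2) + r * (x$2)^2"
      using assms by (simp add: quad2)
    have e1': "p * (p * (x$1)^2 + 2*q * (x$1 * x$2) + r * (x$2)^2) - (p * x$1 + q * x$2)^2 = (p*r - q^2) * (x$2)^2"
      by algebra
    have e1: "p * (p * (x$1)^2 + 2*q * (x$1 * x$2) + r * (x$2)^2) = (p * x$1 + q * x$2)^2"
      using e1' assms(5) by simp
    have e2': "r * (p * (x$1)^2 + 2*q * (x$1 * x$2) + r * (x$2)^2) - (q * x$1 + r * x$2)^2 = (p*r - q^2) * (x$1)^2"
      by algebra
    have e2: "r * (p * (x$1)^2 + 2*q * (x$1 * x$2) + r * (x$2)^2) = (q * x$1 + r * x$2)^2"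
      using e2' assms(5) by simp
    show "s * (x \<bullet> (A *v x)) \<ge> 0"
    proof (cases "s * p > 0")
      case True
      have "(s*p)*(s*(p * (x$1)^2 + 2*q * (x$1 * x$2) + r * (x$2)^2)) = s^2 * (p * x$1 + q * x$2)^2"
        unfolding e1[symmetric] by (simp add: power2_eq_square)
      hence "(s*p)*(s*(p * (x$1)^2 + 2*q * (x$1 * x$2) + r * (x$2)^2)) \<ge> 0" by simp
      then show ?thesis unfolding Q using True by (simp add: zero_le_mult_iff)
    next
      case False
      show ?thesis
      proof (cases "s * r > 0")
        case True
        have "(s*r)*(s*(p * (x$1)^2 + 2*q * (x$1 * x$2) + r * (x$2)^2)) = s^2 * (q * x$1 + r * x$2)^2"
          unfolding e2[symmetric] by (simp add: power2_eq_square)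
        hence "(s*r)*(s*(p * (x$1)^2 + 2*q * (x$1 * x$2) + r * (x$2)^2)) \<ge> 0" by simp
        then show ?thesis unfolding Q using True by (simp add: zero_le_mult_iff)
      next
        case False2: False
        hence "s * p = 0" "s * r = 0" using H False by auto
        thus ?thesis unfolding Q using assms(5) by (cases "s = 0") auto
      qed
    qed
  qed
qed



lemma fd_eq: "(f has_derivative f') (at x) \<Longrightarrow> frechet_derivative f (at x) = f'"
  using frechet_derivative_at by metis

lemma Ck_mono: "open U \<Longrightarrow> Ck_on (Suc k) U f \<Longrightarrow> Ck_on k U f"
proof (induction k arbitrary: f)
  case 0
  then show ?case
    by (auto intro!: continuous_at_imp_continuous_on differentiable_imp_continuous_within)
next
  case (Suc k)
  then show ?case by simp
qed

lemma Ck_cong: "open U \<Longrightarrow> Ck_on k U f \<Longrightarrow> (\<And>x. x \<in> U \<Longrightarrow> f x = g x) \<Longrightarrow> Ck_on k U g"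
proof (induction k arbitrary: f g)
  case 0
  then show ?case using continuous_on_cong by force
next
  case (Suc k)
  have D: "(g has_derivative frechet_derivative f (at x)) (at x)" if "x \<in> U" for x
    using Suc.prems that
    by (auto intro: has_derivative_transform_within_open simp: frechet_derivative_works)
  have E: "frechet_derivative g (at x) = frechet_derivative f (at x)" if "x \<in> U" for x
    using fd_eq[OF D[OF that]] .
  show ?case
    using Suc.prems D E Suc.IH[of "\<lambda>x. frechet_derivative f (at x) v" "\<lambda>x. frechet_derivative g (at x) v" for v]
    by (auto simp: differentiable_def)
qed

lemma Ck_SucI:
  assumes "open U" "\<And>x. x \<in> U \<Longrightarrow> (f has_derivative D x) (at x)"
    "\<And>v. Ck_on k U (\<lambda>x. D x v)"
  shows "Ck_on (Suc k) U f"
proof -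
  have "Ck_on k U (\<lambda>x. frechet_derivative f (at x) v)" for v
    by (rule Ck_cong[OF assms(1) assms(3)[of v]]) (simp add: fd_eq[OF assms(2)])
  moreover have "\<forall>x\<in>U. f differentiable (at x)"
    using assms(2) unfolding differentiable_def by blast
  ultimately show ?thesis by simp
qed

lemma Ck_SucD:
  assumes "Ck_on (Suc k) U f" "x \<in> U"
  shows "(f has_derivative frechet_derivative f (at x)) (at x)"
  using assms by (simp add: frechet_derivative_works)

lemma Ck_const: "open U \<Longrightarrow> Ck_on k U (\<lambda>x. c)"
proof (induction k arbitrary: c)
  case 0
  then show ?case by simp
next
  case (Suc k)
  show ?case
    by (rule Ck_SucI[where D="\<lambda>x v. 0"]) (use Suc in \<open>auto intro: has_derivative_const\<close>)
qed

lemma Ck_linear: "open U \<Longrightarrow> bounded_linear L \<Longrightarrow> Ck_on k U f \<Longrightarrow> Ck_on k U (\<lambda>x. L (f x))"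
proof (induction k arbitrary: f)
  case 0
  then show ?case by (simp add: bounded_linear.continuous_on)
next
  case (Suc k)
  show ?case
    by (rule Ck_SucI[where D="\<lambda>x v. L (frechet_derivative f (at x) v)"])
       (use Suc in \<open>auto intro: bounded_linear.has_derivative simp: frechet_derivative_works[symmetric]\<close>)
qed

lemma Ck_add: "open U \<Longrightarrow> Ck_on k U f \<Longrightarrow> Ck_on k U g \<Longrightarrow> Ck_on k U (\<lambda>x. f x + g x)"
proof (induction k arbitrary: f g)
  case 0
  then show ?case by (simp add: continuous_on_add)
next
  case (Suc k)
  show ?case
    by (rule Ck_SucI[where D="\<lambda>x v. frechet_derivative f (at x) v + frechet_derivative g (at x) v"])
       (use Suc in \<open>auto intro!: has_derivative_add simp: frechet_derivative_works[symmetric]\<close>)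
qed

lemma Ck_bilinear:
  fixes prod :: "'b::euclidean_space \<Rightarrow> 'c::euclidean_space \<Rightarrow> 'd::euclidean_space"
    and f :: "'a::euclidean_space \<Rightarrow> 'b" and g :: "'a \<Rightarrow> 'c"
  assumes "bounded_bilinear prod"
  shows "open U \<Longrightarrow> Ck_on k U f \<Longrightarrow> Ck_on k U g \<Longrightarrow> Ck_on k U (\<lambda>x. prod (f x) (g x))"
proof (induction k arbitrary: f g)
  case 0
  then show ?case by (simp add: bounded_bilinear.continuous_on[OF assms])
next
  case (Suc k)
  show ?case
  proof (rule Ck_SucI[where D="\<lambda>x v. prod (f x) (frechet_derivative g (at x) v) + prod (frechet_derivative f (at x) v) (g x)"])
    show "open U" by fact
    show "((\<lambda>x. prod (f x) (g x)) has_derivative (\<lambda>v. prod (f x) (frechet_derivative g (at x) v) + prod (frechet_derivative f (at x) v) (g x))) (at x)"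
      if "x \<in> U" for x
      using bounded_bilinear.FDERIV[OF assms Ck_SucD[OF Suc.prems(2) that] Ck_SucD[OF Suc.prems(3) that]] .
    show "Ck_on k U (\<lambda>x. prod (f x) (frechet_derivative g (at x) v) + prod (frechet_derivative f (at x) v) (g x))" for v
    proof (rule Ck_add[OF Suc.prems(1)])
      show "Ck_on k U (\<lambda>x. prod (f x) (frechet_derivative g (at x) v))"
        using Suc.prems Ck_mono by (intro Suc.IH) auto
      show "Ck_on k U (\<lambda>x. prod (frechet_derivative f (at x) v) (g x))"
        using Suc.prems Ck_mono by (intro Suc.IH) auto
    qed
  qed
qed

lemma Ck_sum:
  assumes "open U" "finite S" "\<And>i. i \<in> S \<Longrightarrow> Ck_on k U (f i)"
  shows "Ck_on k U (\<lambda>x. \<Sum>i\<in>S. f i x)"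
  using assms(2,3)
proof (induction S rule: finite_induct)
  case empty
  then show ?case using Ck_const[OF assms(1)] by simp
next
  case (insert a F)
  then show ?case by (simp add: Ck_add assms(1))
qed

lemma linear_rep:
  assumes "linear L" shows "L w = (\<Sum>i\<in>Basis. (w \<bullet> i) *\<^sub>R L i)"
proof -
  have "L w = L (\<Sum>i\<in>Basis. (w \<bullet> i) *\<^sub>R i)" by (simp only: euclidean_representation)
  also have "\<dots> = (\<Sum>i\<in>Basis. L ((w \<bullet> i) *\<^sub>R i))" by (rule linear_sum[OF assms])
  also have "\<dots> = (\<Sum>i\<in>Basis. (w \<bullet> i) *\<^sub>R L i)" by (simp only: linear_scale[OF assms])
  finally show ?thesis .
qed

lemma Ck_comp:
  fixes f :: "'a::euclidean_space \<Rightarrow> 'b::euclidean_space" and g :: "'b \<Rightarrow> 'c::euclidean_space"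
  assumes U: "open U" and V: "open V"
  shows "f ` U \<subseteq> V \<Longrightarrow> Ck_on k U f \<Longrightarrow> Ck_on k V g \<Longrightarrow> Ck_on k U (\<lambda>x. g (f x))"
proof (induction k arbitrary: f g)
  case 0
  then show ?case using continuous_on_compose2[of V g U f] by simp
next
  case (Suc k)
  have fU: "f x \<in> V" if "x \<in> U" for x using Suc.prems(1) that by auto
  show ?case
  proof (rule Ck_SucI[where D="\<lambda>x v. frechet_derivative g (at (f x)) (frechet_derivative f (at x) v)"])
    show "open U" by fact
    show "((\<lambda>x. g (f x)) has_derivative (\<lambda>v. frechet_derivative g (at (f x)) (frechet_derivative f (at x) v))) (at x)"
      if "x \<in> U" for x
      by (rule has_derivative_compose[OF Ck_SucD[OF Suc.prems(2) that] Ck_SucD[OF Suc.prems(3) fU[OF that]]])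
    fix v
    have lin: "linear (frechet_derivative g (at (f x)))" if "x \<in> U" for x
      using Suc.prems(3) fU[OF that] by (intro linear_frechet_derivative) simp
    have fk: "Ck_on k U f" using Ck_mono[OF U Suc.prems(2)] .
    have "Ck_on k U (\<lambda>x. \<Sum>i\<in>Basis. (frechet_derivative f (at x) v \<bullet> i) *\<^sub>R frechet_derivative g (at (f x)) i)"
    proof (rule Ck_sum[OF U finite_Basis])
      fix i :: 'b assume "i \<in> Basis"
      have a0: "Ck_on k U (\<lambda>x. frechet_derivative f (at x) v)" using Suc.prems(2) by simp
      have a: "Ck_on k U (\<lambda>x. frechet_derivative f (at x) v \<bullet> i)"
        by (rule Ck_linear[OF U bounded_linear_inner_left a0])
      have g1: "Ck_on k V (\<lambda>y. frechet_derivative g (at y) i)" using Suc.prems(3) by simp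
      have b: "Ck_on k U (\<lambda>x. frechet_derivative g (at (f x)) i)"
        by (rule Suc.IH[OF Suc.prems(1) fk g1])
      show "Ck_on k U (\<lambda>x. (frechet_derivative f (at x) v \<bullet> i) *\<^sub>R frechet_derivative g (at (f x)) i)"
        by (rule Ck_bilinear[OF bounded_bilinear_scaleR U a b])
    qed
    then show "Ck_on k U (\<lambda>x. frechet_derivative g (at (f x)) (frechet_derivative f (at x) v))"
      by (rule Ck_cong[OF U]) (simp add: linear_rep[OF lin, symmetric])
  qed
qed



lemma Ck_id: "open U \<Longrightarrow> Ck_on k U (\<lambda>x. x)"
proof (induction k)
  case 0 then show ?case by (simp add: continuous_on_id)
next
  case (Suc k)
  show ?case
    by (rule Ck_SucI[where D="\<lambda>x v. v"]) (use Suc Ck_const in \<open>auto intro: has_derivative_ident\<close>)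
qed

lemma Ck_inverse:
  fixes f :: "'a::euclidean_space \<Rightarrow> real"
  shows "open U \<Longrightarrow> Ck_on k U f \<Longrightarrow> (\<forall>x\<in>U. f x \<noteq> 0) \<Longrightarrow> Ck_on k U (\<lambda>x. inverse (f x))"
proof (induction k arbitrary: f)
  case 0 then show ?case by (simp add: continuous_on_inverse)
next
  case (Suc k)
  have U: "open U" by fact
  show ?case
  proof (rule Ck_SucI[where D="\<lambda>x v. - (inverse (f x) * frechet_derivative f (at x) v * inverse (f x))"])
    show "open U" by fact
    show "((\<lambda>x. inverse (f x)) has_derivative (\<lambda>v. - (inverse (f x) * frechet_derivative f (at x) v * inverse (f x)))) (at x)"
      if "x \<in> U" for x
      by (rule Deriv.has_derivative_inverse[OF _ Ck_SucD[OF Suc.prems(2) that]]) (use Suc.prems(3) that in auto)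
    fix v
    have fk: "Ck_on k U f" using Ck_mono[OF U Suc.prems(2)] .
    have i: "Ck_on k U (\<lambda>x. inverse (f x))" using Suc.IH[OF U fk] Suc.prems(3) by simp
    have d: "Ck_on k U (\<lambda>x. frechet_derivative f (at x) v)" using Suc.prems(2) by simp
    have m: "Ck_on k U (\<lambda>x. inverse (f x) * frechet_derivative f (at x) v * inverse (f x))"
      by (rule Ck_bilinear[OF bounded_bilinear_mult U Ck_bilinear[OF bounded_bilinear_mult U i d] i])
    show "Ck_on k U (\<lambda>x. - (inverse (f x) * frechet_derivative f (at x) v * inverse (f x)))"
      by (rule Ck_linear[OF U bounded_linear_minus[OF bounded_linear_ident] m])
  qed
qed

lemma Ck_exp:
  fixes f :: "'a::euclidean_space \<Rightarrow> real"
  shows "open U \<Longrightarrow> Ck_on k U f \<Longrightarrow> Ck_on k U (\<lambda>x. exp (f x))"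
proof (induction k arbitrary: f)
  case 0 then show ?case by (simp add: continuous_on_exp)
next
  case (Suc k)
  have U: "open U" by fact
  show ?case
  proof (rule Ck_SucI[where D="\<lambda>x v. frechet_derivative f (at x) v * exp (f x)"])
    show "open U" by fact
    show "((\<lambda>x. exp (f x)) has_derivative (\<lambda>v. frechet_derivative f (at x) v * exp (f x))) (at x)"
      if "x \<in> U" for x
      by (rule DERIV_compose_FDERIV[OF DERIV_exp Ck_SucD[OF Suc.prems(2) that]])
    fix v
    have fk: "Ck_on k U f" using Ck_mono[OF U Suc.prems(2)] .
    have i: "Ck_on k U (\<lambda>x. exp (f x))" using Suc.IH[OF U fk] .
    have d: "Ck_on k U (\<lambda>x. frechet_derivative f (at x) v)" using Suc.prems(2) by simp
    show "Ck_on k U (\<lambda>x. frechet_derivative f (at x) v * exp (f x))"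
      by (rule Ck_bilinear[OF bounded_bilinear_mult U d i])
  qed
qed

lemma Ck_ln:
  fixes f :: "'a::euclidean_space \<Rightarrow> real"
  shows "open U \<Longrightarrow> Ck_on k U f \<Longrightarrow> (\<forall>x\<in>U. f x > 0) \<Longrightarrow> Ck_on k U (\<lambda>x. ln (f x))"
proof (cases k)
  case 0
  assume "open U" "Ck_on k U f" "\<forall>x\<in>U. f x > 0"
  then show ?thesis using 0 by (auto intro!: continuous_on_ln)
next
  case (Suc j)
  assume U: "open U" and fk: "Ck_on k U f" and pos: "\<forall>x\<in>U. f x > 0"
  show ?thesis unfolding Suc
  proof (rule Ck_SucI[where D="\<lambda>x v. frechet_derivative f (at x) v * inverse (f x)"])
    show "open U" by fact
    show "((\<lambda>x. ln (f x)) has_derivative (\<lambda>v. frechet_derivative f (at x) v * inverse (f x))) (at x)"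
      if "x \<in> U" for x
      using fk unfolding Suc
      by (intro DERIV_compose_FDERIV[OF DERIV_ln Ck_SucD]) (use pos that in auto)
    fix v
    have fj: "Ck_on j U f" using Ck_mono[OF U] fk Suc by simp
    have nz: "\<forall>x\<in>U. f x \<noteq> 0" using pos by auto
    have i: "Ck_on j U (\<lambda>x. inverse (f x))" using Ck_inverse[OF U fj nz] .
    have d: "Ck_on j U (\<lambda>x. frechet_derivative f (at x) v)" using fk Suc by simp
    show "Ck_on j U (\<lambda>x. frechet_derivative f (at x) v * inverse (f x))"
      by (rule Ck_bilinear[OF bounded_bilinear_mult U d i])
  qed
qed

lemma Ck_sqrt:
  fixes f :: "'a::euclidean_space \<Rightarrow> real"
  shows "open U \<Longrightarrow> Ck_on k U f \<Longrightarrow> (\<forall>x\<in>U. f x > 0) \<Longrightarrow> Ck_on k U (\<lambda>x. sqrt (f x))"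
proof (induction k arbitrary: f)
  case 0 then show ?case by (simp add: continuous_on_real_sqrt)
next
  case (Suc k)
  have U: "open U" by fact
  show ?case
  proof (rule Ck_SucI[where D="\<lambda>x v. frechet_derivative f (at x) v * (inverse (sqrt (f x)) / 2)"])
    show "open U" by fact
    show "((\<lambda>x. sqrt (f x)) has_derivative (\<lambda>v. frechet_derivative f (at x) v * (inverse (sqrt (f x)) / 2))) (at x)"
      if "x \<in> U" for x
      by (rule DERIV_compose_FDERIV[OF DERIV_real_sqrt Ck_SucD[OF Suc.prems(2) that]]) (use Suc.prems(3) that in auto)
    fix v
    have fk: "Ck_on k U f" using Ck_mono[OF U Suc.prems(2)] .
    have s: "Ck_on k U (\<lambda>x. sqrt (f x))" using Suc.IH[OF U fk] Suc.prems(3) by simp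
    have nz: "\<forall>x\<in>U. sqrt (f x) \<noteq> 0" using Suc.prems(3) by auto
    have i: "Ck_on k U (\<lambda>x. inverse (sqrt (f x)))" using Ck_inverse[OF U s nz] .
    have i2: "Ck_on k U (\<lambda>x. inverse (sqrt (f x)) / 2)"
      using Ck_bilinear[OF bounded_bilinear_mult U i Ck_const[OF U, of k "1/2"]] by (simp add: field_simps)
    have d: "Ck_on k U (\<lambda>x. frechet_derivative f (at x) v)" using Suc.prems(2) by simp
    show "Ck_on k U (\<lambda>x. frechet_derivative f (at x) v * (inverse (sqrt (f x)) / 2))"
      by (rule Ck_bilinear[OF bounded_bilinear_mult U d i2])
  qed
qed

definition sm :: "'a::euclidean_space set \<Rightarrow> ('a \<Rightarrow> 'b::euclidean_space) \<Rightarrow> bool" where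
  "sm U f \<longleftrightarrow> open U \<and> (\<forall>k. Ck_on k U f)"

lemma smooth_on_sm: "smooth_on U f = sm U f"
  by (simp add: smooth_on_def sm_def)

lemma sm_const: "open U \<Longrightarrow> sm U (\<lambda>x. c)" by (simp add: sm_def Ck_const)
lemma sm_id: "open U \<Longrightarrow> sm U (\<lambda>x. x)" by (simp add: sm_def Ck_id)
lemma sm_linear: "bounded_linear L \<Longrightarrow> sm U f \<Longrightarrow> sm U (\<lambda>x. L (f x))"
  by (simp add: sm_def Ck_linear)
lemma sm_add: "sm U f \<Longrightarrow> sm U g \<Longrightarrow> sm U (\<lambda>x. f x + g x)"
  by (simp add: sm_def Ck_add)
lemma sm_minus: "sm U f \<Longrightarrow> sm U (\<lambda>x. - f x)"
  using sm_linear[OF bounded_linear_minus[OF bounded_linear_ident]] by blast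
lemma sm_diff: "sm U f \<Longrightarrow> sm U g \<Longrightarrow> sm U (\<lambda>x. f x - g x)"
  using sm_add[OF _ sm_minus, of U f g] by simp
lemma sm_mult: "sm U (f::_\<Rightarrow>real) \<Longrightarrow> sm U g \<Longrightarrow> sm U (\<lambda>x. f x * g x)"
  by (simp add: sm_def Ck_bilinear[OF bounded_bilinear_mult])
lemma sm_scaleR: "sm U (f::_\<Rightarrow>real) \<Longrightarrow> sm U g \<Longrightarrow> sm U (\<lambda>x. f x *\<^sub>R g x)"
  by (simp add: sm_def Ck_bilinear[OF bounded_bilinear_scaleR])
lemma sm_inverse: "sm U (f::_\<Rightarrow>real) \<Longrightarrow> (\<And>x. x \<in> U \<Longrightarrow> f x \<noteq> 0) \<Longrightarrow> sm U (\<lambda>x. inverse (f x))"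
  by (simp add: sm_def Ck_inverse)
lemma sm_divide: "sm U (f::_\<Rightarrow>real) \<Longrightarrow> sm U g \<Longrightarrow> (\<And>x. x \<in> U \<Longrightarrow> g x \<noteq> 0) \<Longrightarrow> sm U (\<lambda>x. f x / g x)"
  unfolding divide_inverse by (intro sm_mult sm_inverse)
lemma sm_exp: "sm U (f::_\<Rightarrow>real) \<Longrightarrow> sm U (\<lambda>x. exp (f x))"
  by (simp add: sm_def Ck_exp)
lemma sm_ln: "sm U (f::_\<Rightarrow>real) \<Longrightarrow> (\<And>x. x \<in> U \<Longrightarrow> f x > 0) \<Longrightarrow> sm U (\<lambda>x. ln (f x))"
  by (simp add: sm_def Ck_ln)
lemma sm_sqrt: "sm U (f::_\<Rightarrow>real) \<Longrightarrow> (\<And>x. x \<in> U \<Longrightarrow> f x > 0) \<Longrightarrow> sm U (\<lambda>x. sqrt (f x))"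
  by (simp add: sm_def Ck_sqrt)
lemma sm_power2: "sm U (f::_\<Rightarrow>real) \<Longrightarrow> sm U (\<lambda>x. (f x)^2)"
  unfolding power2_eq_square by (rule sm_mult)
lemma sm_fst: "sm U f \<Longrightarrow> sm U (\<lambda>x. fst (f x))"
  by (rule sm_linear[OF bounded_linear_fst])
lemma sm_snd: "sm U f \<Longrightarrow> sm U (\<lambda>x. snd (f x))"
  by (rule sm_linear[OF bounded_linear_snd])
lemma sm_Re: "sm U f \<Longrightarrow> sm U (\<lambda>x. Re (f x))"
  by (rule sm_linear[OF bounded_linear_Re])
lemma sm_Im: "sm U f \<Longrightarrow> sm U (\<lambda>x. Im (f x))"
  by (rule sm_linear[OF bounded_linear_Im])
lemma sm_Pair: "sm U f \<Longrightarrow> sm U g \<Longrightarrow> sm U (\<lambda>x. (f x, g x))"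
proof -
  assume f: "sm U f" and g: "sm U g"
  have "sm U (\<lambda>x. (f x, 0) + (0, g x))"
    by (intro sm_add sm_linear[OF bounded_linear_Pair[OF bounded_linear_ident bounded_linear_zero] f]
        sm_linear[OF bounded_linear_Pair[OF bounded_linear_zero bounded_linear_ident] g])
  then show ?thesis by simp
qed
lemma sm_Complex: "sm U f \<Longrightarrow> sm U g \<Longrightarrow> sm U (\<lambda>x. Complex (f x) (g x))"
proof -
  assume f: "sm U f" and g: "sm U g"
  have U: "open U" using f by (simp add: sm_def)
  have "sm U (\<lambda>x. f x *\<^sub>R (1::complex) + g x *\<^sub>R \<i>)"
    by (intro sm_add sm_scaleR f g sm_const U)
  moreover have "f x *\<^sub>R (1::complex) + g x *\<^sub>R \<i> = Complex (f x) (g x)" for x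
    by (simp add: complex_eq_iff)
  ultimately show ?thesis by simp
qed
lemma sm_comp: "sm V g \<Longrightarrow> sm U f \<Longrightarrow> (\<And>x. x \<in> U \<Longrightarrow> f x \<in> V) \<Longrightarrow> sm U (\<lambda>x. g (f x))"
proof -
  assume g: "sm V g" and f: "sm U f" and fV: "\<And>x. x \<in> U \<Longrightarrow> f x \<in> V"
  have "f ` U \<subseteq> V" using fV by auto
  then show ?thesis using f g unfolding sm_def using Ck_comp[of U V f _ g] by simp
qed
lemma sm_cong: "sm U f \<Longrightarrow> (\<And>x. x \<in> U \<Longrightarrow> f x = g x) \<Longrightarrow> sm U g"
  unfolding sm_def using Ck_cong[of U _ f g] by simp



definition al6 :: "real \<Rightarrow> real \<Rightarrow> real \<Rightarrow> real \<Rightarrow> real \<Rightarrow> real \<Rightarrow> real" where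
  "al6 a b c d e f = (b + c) * (a - d) - (d + e) * (f - c)"

lemma tr6_alt: "tr6 a b c d e f = (d+e)*(a-d) + (b+c)*(f-c)"
  unfolding tr6_def by algebra
lemma kp6_alt: "kp6 a b c d e f = (b+c)*(d-e) - (d+e)*(b-c)"
  unfolding kp6_def by algebra
lemma sg6_alt: "sg6 a b c d e f = (d-e)*(a-d) + (b-c)*(f-c)"
  unfolding sg6_def by algebra

definition rA1 :: "real \<Rightarrow> real \<Rightarrow> real \<Rightarrow> real \<Rightarrow> real" where
  "rA1 u w T L = (T*u - L*w) / (u^2 + w^2)"
definition rA2 :: "real \<Rightarrow> real \<Rightarrow> real \<Rightarrow> real \<Rightarrow> real" where
  "rA2 u w T L = (T*w + L*u) / (u^2 + w^2)"
definition rBp :: "real \<Rightarrow> real \<Rightarrow> real \<Rightarrow> real \<Rightarrow> real \<Rightarrow> real \<Rightarrow> real" where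
  "rBp u w T S K L = (L*S - K*(u^2 + w^2)) / T"
definition rB1 :: "real \<Rightarrow> real \<Rightarrow> real \<Rightarrow> real \<Rightarrow> real \<Rightarrow> real \<Rightarrow> real" where
  "rB1 u w T S K L = (S*u - rBp u w T S K L * w) / (u^2 + w^2)"
definition rB2 :: "real \<Rightarrow> real \<Rightarrow> real \<Rightarrow> real \<Rightarrow> real \<Rightarrow> real \<Rightarrow> real" where
  "rB2 u w T S K L = (S*w + rBp u w T S K L * u) / (u^2 + w^2)"

definition rec6 :: "real \<Rightarrow> real \<Rightarrow> real \<Rightarrow> real \<Rightarrow> real \<Rightarrow> real \<Rightarrow> R6" where
  "rec6 u w T S K L =
    (u + (rA1 u w T L + rB1 u w T S K L)/2,
     (rA2 u w T L + rB2 u w T S K L)/2,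
     (rA2 u w T L - rB2 u w T S K L)/2,
     (rA1 u w T L + rB1 u w T S K L)/2,
     (rA1 u w T L - rB1 u w T S K L)/2,
     w + (rA2 u w T L - rB2 u w T S K L)/2)"

lemma rec_coords:
  assumes r: "(a-d)^2 + (f-c)^2 \<noteq> 0" and T: "tr6 a b c d e f \<noteq> 0"
  shows "rec6 (a-d) (f-c) (tr6 a b c d e f) (sg6 a b c d e f) (kp6 a b c d e f) (al6 a b c d e f) = (a,b,c,d,e,f)"
proof -
  define u w T S K L where "u = a-d" "w = f-c" "T = tr6 a b c d e f" "S = sg6 a b c d e f"
    "K = kp6 a b c d e f" "L = al6 a b c d e f"
  have r': "u^2 + w^2 \<noteq> 0" using r by (simp add: u_w_T_S_K_L_def)
  have T': "T \<noteq> 0" using T by (simp add: u_w_T_S_K_L_def)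
  have e1: "T*u - L*w = (d+e) * (u^2+w^2)"
    unfolding u_w_T_S_K_L_def tr6_alt al6_def by algebra
  have e2: "T*w + L*u = (b+c) * (u^2+w^2)"
    unfolding u_w_T_S_K_L_def tr6_alt al6_def by algebra
  have e3: "L*S - K*(u^2+w^2) = ((b-c)*u - (d-e)*w) * T"
    unfolding u_w_T_S_K_L_def tr6_alt sg6_alt al6_def kp6_def by algebra
  have A1: "rA1 u w T L = d+e" unfolding rA1_def e1 using r' by simp
  have A2: "rA2 u w T L = b+c" unfolding rA2_def e2 using r' by simp
  have Bp: "rBp u w T S K L = (b-c)*u - (d-e)*w" unfolding rBp_def e3 using T' by simp
  have e4: "S*u - ((b-c)*u - (d-e)*w) * w = (d-e) * (u^2+w^2)"
    unfolding u_w_T_S_K_L_def sg6_alt by algebra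
  have e5: "S*w + ((b-c)*u - (d-e)*w) * u = (b-c) * (u^2+w^2)"
    unfolding u_w_T_S_K_L_def sg6_alt by algebra
  have B1: "rB1 u w T S K L = d-e" unfolding rB1_def Bp e4 using r' by simp
  have B2: "rB2 u w T S K L = b-c" unfolding rB2_def Bp e5 using r' by simp
  have "rec6 u w T S K L = (a,b,c,d,e,f)"
    unfolding rec6_def A1 A2 B1 B2 by (simp add: u_w_T_S_K_L_def)
  then show ?thesis by (simp add: u_w_T_S_K_L_def)
qed

lemma coords_rec:
  assumes r: "u^2 + w^2 \<noteq> 0" and T: "T \<noteq> 0" and eq: "rec6 u w T S K L = (a,b,c,d,e,f)"
  shows "a - d = u" "f - c = w" "tr6 a b c d e f = T" "sg6 a b c d e f = S"
    "kp6 a b c d e f = K" "al6 a b c d e f = L"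
proof -
  define A1 A2 B1 B2 Bp where "A1 = rA1 u w T L" "A2 = rA2 u w T L" "B1 = rB1 u w T S K L"
    "B2 = rB2 u w T S K L" "Bp = rBp u w T S K L"
  have abc: "a = u + (A1+B1)/2" "b = (A2+B2)/2" "c = (A2-B2)/2" "d = (A1+B1)/2" "e = (A1-B1)/2"
    "f = w + (A2-B2)/2"
    using eq unfolding rec6_def A1_A2_B1_B2_Bp_def by auto
  have hA1: "A1 * (u^2+w^2) = T*u - L*w" unfolding A1_A2_B1_B2_Bp_def rA1_def using r by simp
  have hA2: "A2 * (u^2+w^2) = T*w + L*u" unfolding A1_A2_B1_B2_Bp_def rA2_def using r by simp
  have hBp: "Bp * T = L*S - K*(u^2+w^2)" unfolding A1_A2_B1_B2_Bp_def rBp_def using T by simp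
  have hB1: "B1 * (u^2+w^2) = S*u - Bp*w" unfolding A1_A2_B1_B2_Bp_def rB1_def using r by simp
  have hB2: "B2 * (u^2+w^2) = S*w + Bp*u" unfolding A1_A2_B1_B2_Bp_def rB2_def using r by simp
  have s1: "d + e = A1" "b + c = A2" "d - e = B1" "b - c = B2" "a - d = u" "f - c = w"
    using abc by simp_all
  show "a - d = u" "f - c = w" using abc by simp_all
  have "tr6 a b c d e f = A1*u + A2*w" unfolding tr6_alt s1 ..
  also have "\<dots> = T"
  proof -
    have "(A1*u + A2*w) * (u^2+w^2) = T * (u^2+w^2)"
    proof -
      have "(A1*u + A2*w) * (u^2+w^2) = (A1 * (u^2+w^2))*u + (A2 * (u^2+w^2))*w" by algebra
      also have "\<dots> = T * (u^2+w^2)" unfolding hA1 hA2 by algebra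
      finally show ?thesis .
    qed
    then show ?thesis using mult_right_cancel[OF r] by blast
  qed
  finally show "tr6 a b c d e f = T" .
  have "sg6 a b c d e f = B1*u + B2*w" unfolding sg6_alt s1 ..
  also have "\<dots> = S"
  proof -
    have "(B1*u + B2*w) * (u^2+w^2) = (B1 * (u^2+w^2))*u + (B2 * (u^2+w^2))*w" by algebra
    also have "\<dots> = S * (u^2+w^2)" unfolding hB1 hB2 by algebra
    finally show ?thesis using mult_right_cancel[OF r] by blast
  qed
  finally show "sg6 a b c d e f = S" .
  have "al6 a b c d e f = A2*u - A1*w" unfolding al6_def s1 ..
  also have "\<dots> = L"
  proof -
    have "(A2*u - A1*w) * (u^2+w^2) = (A2 * (u^2+w^2))*u - (A1 * (u^2+w^2))*w" by algebra
    also have "\<dots> = L * (u^2+w^2)" unfolding hA1 hA2 by algebra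
    finally show ?thesis using mult_right_cancel[OF r] by blast
  qed
  finally show "al6 a b c d e f = L" .
  have "kp6 a b c d e f = A2*B1 - A1*B2" unfolding kp6_alt s1 ..
  also have "\<dots> = K"
  proof -
    have "(A2*B1 - A1*B2) * (u^2+w^2)^2 = (A2*(u^2+w^2))*(B1*(u^2+w^2)) - (A1*(u^2+w^2))*(B2*(u^2+w^2))" by algebra
    also have "\<dots> = (T*w + L*u)*(S*u - Bp*w) - (T*u - L*w)*(S*w + Bp*u)" unfolding hA1 hA2 hB1 hB2 ..
    also have "\<dots> = (L*S - Bp*T) * (u^2+w^2)" by algebra
    also have "\<dots> = K * (u^2+w^2)^2"
    proof -
      have "L*S - Bp*T = K*(u^2+w^2)" using hBp by simp
      then show ?thesis by (simp add: power2_eq_square[of "u^2+w^2"])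
    qed
    finally show ?thesis using mult_right_cancel[OF power_not_zero[OF r]] by blast
  qed
  finally show "kp6 a b c d e f = K" .
qed



definition Ms :: "real \<Rightarrow> R6 set" where
  "Ms s = {(a,b,c,d,e,f). (tr6 a b c d e f)^2 = (sg6 a b c d e f)^2 + (kp6 a b c d e f)^2 \<and> s * tr6 a b c d e f > 0}"

lemma pqr_logic:
  fixes p q r s :: real
  assumes s: "s * s = 1"
  shows "(\<not>(p = 0 \<and> q = 0 \<and> r = 0) \<and> p*r = q^2 \<and> s*p \<ge> 0 \<and> s*r \<ge> 0) \<longleftrightarrow>
         (p*r = q^2 \<and> s*(p+r) > 0)"
proof
  assume H: "\<not>(p = 0 \<and> q = 0 \<and> r = 0) \<and> p*r = q^2 \<and> s*p \<ge> 0 \<and> s*r \<ge> 0"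
  have "s \<noteq> 0" using s by auto
  have "s*(p+r) \<noteq> 0"
  proof
    assume "s*(p+r) = 0"
    hence h: "s*p + s*r = 0" by (simp add: distrib_left)
    have "s*p = 0" "s*r = 0" using h H by linarith+
    hence "p = 0" "r = 0" using \<open>s \<noteq> 0\<close> by simp_all
    hence "q = 0" using H by simp
    thus False using H \<open>p = 0\<close> \<open>r = 0\<close> by simp
  qed
  then show "p*r = q^2 \<and> s*(p+r) > 0" using H by (simp add: distrib_left)
next
  assume H: "p*r = q^2 \<and> s*(p+r) > 0"
  have prod: "(s*p)*(s*r) \<ge> 0"
  proof -
    have "(s*p)*(s*r) = s * s * (p*r)" by (simp add: ac_simps)
    also have "\<dots> = q^2" using H s by simp
    finally show ?thesis by simp
  qed
  have sum: "s*p + s*r > 0" using H by (simp add: distrib_left)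
  have "s*p \<ge> 0"
  proof (rule ccontr)
    assume "\<not> s*p \<ge> 0"
    hence "s*p < 0" by simp
    moreover hence "s*r > 0" using sum by simp
    ultimately have "(s*p)*(s*r) < 0" by (simp add: mult_neg_pos)
    thus False using prod by simp
  qed
  moreover have "s*r \<ge> 0"
  proof (rule ccontr)
    assume "\<not> s*r \<ge> 0"
    hence "s*r < 0" by simp
    moreover hence "s*p > 0" using sum by simp
    ultimately have "(s*p)*(s*r) < 0" by (simp add: mult_pos_neg)
    thus False using prod by simp
  qed
  moreover have "\<not>(p = 0 \<and> q = 0 \<and> r = 0)" using H by auto
  ultimately show "\<not>(p = 0 \<and> q = 0 \<and> r = 0) \<and> p*r = q^2 \<and> s*p \<ge> 0 \<and> s*r \<ge> 0" using H by simp
qed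

lemma char_gen:
  fixes s :: real
  assumes s: "s * s = 1"
  shows "(rank (ricci a b c d e f) = 1 \<and> (\<forall>x. s * (x \<bullet> (ricci a b c d e f *v x)) \<ge> 0)) \<longleftrightarrow>
         ((tr6 a b c d e f)^2 = (sg6 a b c d e f)^2 + (kp6 a b c d e f)^2 \<and> s * tr6 a b c d e f > 0)"
proof -
  define A where "A = ricci a b c d e f"
  define p q r where "p = (a - d) * d + b * (f - c)" "q = c * d - b * e" "r = c * (f - c) + (a - d) * e"
  have ent: "A$1$1 = p" "A$2$2 = r" "A$1$2 = q" "A$2$1 = q" unfolding A_def p_q_r_def by (simp_all add: ricci_entries)
  have det: "det A = p*r - q^2" using ent by (simp add: det_2 power2_eq_square)
  have A0: "A = 0 \<longleftrightarrow> p = 0 \<and> q = 0 \<and> r = 0" using ent mat2_eq0[of A] by auto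
  have tr: "tr6 a b c d e f = p + r" "sg6 a b c d e f = p - r" "kp6 a b c d e f = 2*q"
    unfolding p_q_r_def tr6_def sg6_def kp6_def by simp_all
  have key: "(tr6 a b c d e f)^2 - ((sg6 a b c d e f)^2 + (kp6 a b c d e f)^2) = 4*(p*r) - 4*q^2"
    unfolding tr by algebra
  have eqv: "(tr6 a b c d e f)^2 = (sg6 a b c d e f)^2 + (kp6 a b c d e f)^2 \<longleftrightarrow> p*r = q^2"
    using key by linarith
  have "(rank A = 1 \<and> (\<forall>x. s * (x \<bullet> (A *v x)) \<ge> 0)) \<longleftrightarrow>
        (\<not>(p = 0 \<and> q = 0 \<and> r = 0) \<and> p*r = q^2 \<and> s*p \<ge> 0 \<and> s*r \<ge> 0)"
  proof
    assume H: "rank A = 1 \<and> (\<forall>x. s * (x \<bullet> (A *v x)) \<ge> 0)"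
    hence d0: "p*r = q^2" and nz: "\<not>(p = 0 \<and> q = 0 \<and> r = 0)" using rank1_iff[of A] det A0 by auto
    have "s*p \<ge> 0 \<and> s*r \<ge> 0" using sym_psd_iff[OF ent d0, of s] H by simp
    then show "\<not>(p = 0 \<and> q = 0 \<and> r = 0) \<and> p*r = q^2 \<and> s*p \<ge> 0 \<and> s*r \<ge> 0" using d0 nz by simp
  next
    assume H: "\<not>(p = 0 \<and> q = 0 \<and> r = 0) \<and> p*r = q^2 \<and> s*p \<ge> 0 \<and> s*r \<ge> 0"
    hence "rank A = 1" using rank1_iff[of A] det A0 by auto
    moreover have "\<forall>x. s * (x \<bullet> (A *v x)) \<ge> 0" using sym_psd_iff[OF ent, of s] H by simp
    ultimately show "rank A = 1 \<and> (\<forall>x. s * (x \<bullet> (A *v x)) \<ge> 0)" by simp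
  qed
  also have "\<dots> \<longleftrightarrow> (p*r = q^2 \<and> s*(p+r) > 0)" by (rule pqr_logic[OF s])
  finally show ?thesis unfolding A_def[symmetric] using eqv tr(1) by simp
qed

lemma A1plus_Ms: "A1plus = Ms 1"
proof -
  have "(a,b,c,d,e,f) \<in> A1plus \<longleftrightarrow> (a,b,c,d,e,f) \<in> Ms 1" for a b c d e f
    using char_gen[of 1 a b c d e f] by (simp add: A1plus_def Ms_def psd_def)
  then show ?thesis by (auto simp: set_eq_iff)
qed

lemma A1minus_Ms: "A1minus = Ms (-1)"
proof -
  have "(a,b,c,d,e,f) \<in> A1minus \<longleftrightarrow> (a,b,c,d,e,f) \<in> Ms (-1)" for a b c d e f
    using char_gen[of "-1" a b c d e f] by (simp add: A1minus_def Ms_def nsd_def)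
  then show ?thesis by (auto simp: set_eq_iff)
qed



abbreviation pr1 :: "R6 \<Rightarrow> real" where "pr1 p \<equiv> fst p"
abbreviation pr2 :: "R6 \<Rightarrow> real" where "pr2 p \<equiv> fst (snd p)"
abbreviation pr3 :: "R6 \<Rightarrow> real" where "pr3 p \<equiv> fst (snd (snd p))"
abbreviation pr4 :: "R6 \<Rightarrow> real" where "pr4 p \<equiv> fst (snd (snd (snd p)))"
abbreviation pr5 :: "R6 \<Rightarrow> real" where "pr5 p \<equiv> fst (snd (snd (snd (snd p))))"
abbreviation pr6 :: "R6 \<Rightarrow> real" where "pr6 p \<equiv> snd (snd (snd (snd (snd p))))"

definition Phi :: "real \<Rightarrow> R6 \<Rightarrow> R6" where
  "Phi s p = (pr1 p - pr4 p, pr6 p - pr3 p,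
     s * tr6 (pr1 p) (pr2 p) (pr3 p) (pr4 p) (pr5 p) (pr6 p)
       - sqrt ((sg6 (pr1 p) (pr2 p) (pr3 p) (pr4 p) (pr5 p) (pr6 p))^2 + (kp6 (pr1 p) (pr2 p) (pr3 p) (pr4 p) (pr5 p) (pr6 p))^2),
     sg6 (pr1 p) (pr2 p) (pr3 p) (pr4 p) (pr5 p) (pr6 p),
     kp6 (pr1 p) (pr2 p) (pr3 p) (pr4 p) (pr5 p) (pr6 p),
     al6 (pr1 p) (pr2 p) (pr3 p) (pr4 p) (pr5 p) (pr6 p))"

definition Wd :: "real \<Rightarrow> R6 set" where
  "Wd s = {p. 0 < (pr1 p - pr4 p)^2 + (pr6 p - pr3 p)^2 \<and>
     0 < s * tr6 (pr1 p) (pr2 p) (pr3 p) (pr4 p) (pr5 p) (pr6 p) \<and>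
     0 < (sg6 (pr1 p) (pr2 p) (pr3 p) (pr4 p) (pr5 p) (pr6 p))^2 + (kp6 (pr1 p) (pr2 p) (pr3 p) (pr4 p) (pr5 p) (pr6 p))^2}"

definition Psi :: "real \<Rightarrow> R6 \<Rightarrow> R6" where
  "Psi s y = rec6 (pr1 y) (pr2 y) (s * (pr3 y + sqrt ((pr4 y)^2 + (pr5 y)^2))) (pr4 y) (pr5 y) (pr6 y)"

definition Vd :: "R6 set" where
  "Vd = {y. 0 < (pr1 y)^2 + (pr2 y)^2 \<and> 0 < (pr4 y)^2 + (pr5 y)^2 \<and> 0 < pr3 y + sqrt ((pr4 y)^2 + (pr5 y)^2)}"

definition Sl :: "R6 set" where
  "Sl = {y. pr3 y = 0}"

lemma Phi_simp: "Phi s (a,b,c,d,e,f) = (a - d, f - c,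
     s * tr6 a b c d e f - sqrt ((sg6 a b c d e f)^2 + (kp6 a b c d e f)^2),
     sg6 a b c d e f, kp6 a b c d e f, al6 a b c d e f)"
  by (simp add: Phi_def)

lemma Wd_simp: "(a,b,c,d,e,f) \<in> Wd s \<longleftrightarrow> 0 < (a - d)^2 + (f - c)^2 \<and> 0 < s * tr6 a b c d e f \<and>
     0 < (sg6 a b c d e f)^2 + (kp6 a b c d e f)^2"
  by (simp add: Wd_def)

lemma Psi_simp: "Psi s (y1,y2,y3,y4,y5,y6) = rec6 y1 y2 (s * (y3 + sqrt (y4^2 + y5^2))) y4 y5 y6"
  by (simp add: Psi_def)

lemma Vd_simp: "(y1,y2,y3,y4,y5,y6) \<in> Vd \<longleftrightarrow> 0 < y1^2 + y2^2 \<and> 0 < y4^2 + y5^2 \<and> 0 < y3 + sqrt (y4^2 + y5^2)"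
  by (simp add: Vd_def)

lemma Ms_simp: "(a,b,c,d,e,f) \<in> Ms s \<longleftrightarrow> (tr6 a b c d e f)^2 = (sg6 a b c d e f)^2 + (kp6 a b c d e f)^2 \<and> s * tr6 a b c d e f > 0"
  by (simp add: Ms_def)

lemma subspace_Sl: "subspace Sl"
  unfolding subspace_def Sl_def by simp

lemma open_Wd: "open (Wd s)"
  unfolding Wd_def tr6_def sg6_def kp6_def
  by (intro open_Collect_conj open_Collect_less continuous_intros)

lemma open_Vd: "open Vd"
  unfolding Vd_def
  by (intro open_Collect_conj open_Collect_less continuous_intros)

lemma sabs: assumes "s * s = 1" "0 < s * T" shows "sqrt (T^2) = s * T"
proof -
  have "\<bar>s\<bar> = 1" using assms(1) by (metis abs_mult_self_eq abs_one mult_1_right real_sqrt_abs2 real_sqrt_one)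
  hence "\<bar>T\<bar> = \<bar>s * T\<bar>" by (simp add: abs_mult)
  thus ?thesis using assms(2) by simp
qed

lemma Ms_sub_Wd: assumes s: "s * s = 1" shows "Ms s \<subseteq> Wd s"
proof
  fix p assume p: "p \<in> Ms s"
  obtain a b c d e f where pe: "p = (a,b,c,d,e,f)" by (cases p) auto
  have M: "(tr6 a b c d e f)^2 = (sg6 a b c d e f)^2 + (kp6 a b c d e f)^2" "s * tr6 a b c d e f > 0"
    using p pe Ms_simp by auto
  have T0: "tr6 a b c d e f \<noteq> 0" using M(2) by auto
  have "0 < (a - d)^2 + (f - c)^2"
  proof (rule ccontr)
    assume "\<not> 0 < (a - d)^2 + (f - c)^2"
    hence "a - d = 0" "f - c = 0" by (smt (verit) zero_le_power2 power2_eq_square mult_eq_0_iff)+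
    hence "tr6 a b c d e f = 0" unfolding tr6_alt by simp
    thus False using T0 by simp
  qed
  moreover have "0 < (sg6 a b c d e f)^2 + (kp6 a b c d e f)^2"
    using M(1) T0 zero_less_power2[of "tr6 a b c d e f"] by linarith
  ultimately show "p \<in> Wd s" using pe M(2) Wd_simp by simp
qed

lemma Psi_Phi: assumes s: "s * s = 1" and p: "p \<in> Wd s" shows "Psi s (Phi s p) = p"
proof -
  obtain a b c d e f where pe: "p = (a,b,c,d,e,f)" by (cases p) auto
  have W: "0 < (a - d)^2 + (f - c)^2" "0 < s * tr6 a b c d e f" using p pe Wd_simp by auto
  have eqT: "s * (s * tr6 a b c d e f - sqrt ((sg6 a b c d e f)^2 + (kp6 a b c d e f)^2) + sqrt ((sg6 a b c d e f)^2 + (kp6 a b c d e f)^2)) = tr6 a b c d e f"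
    using s by (simp add: mult.assoc[symmetric])
  show ?thesis unfolding pe Phi_simp Psi_simp eqT
    by (rule rec_coords) (use W in auto)
qed

lemma Phi_Psi: assumes s: "s * s = 1" and y: "y \<in> Vd" shows "Phi s (Psi s y) = y" "Psi s y \<in> Wd s"
proof -
  obtain y1 y2 y3 y4 y5 y6 where ye: "y = (y1,y2,y3,y4,y5,y6)" by (cases y) auto
  have V: "0 < y1^2 + y2^2" "0 < y4^2 + y5^2" "0 < y3 + sqrt (y4^2 + y5^2)" using y ye Vd_simp by auto
  define T where "T = s * (y3 + sqrt (y4^2 + y5^2))"
  have sT: "s * T = y3 + sqrt (y4^2 + y5^2)" unfolding T_def using s by (simp add: mult.assoc[symmetric])
  have T0: "T \<noteq> 0" using sT V(3) by auto
  obtain a b c d e f where re: "rec6 y1 y2 T y4 y5 y6 = (a,b,c,d,e,f)" by (cases "rec6 y1 y2 T y4 y5 y6") auto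
  have Pe: "Psi s y = (a,b,c,d,e,f)" unfolding ye Psi_simp T_def[symmetric] re ..
  note cr = coords_rec[OF _ T0 re]
  have r0: "y1^2 + y2^2 \<noteq> 0" using V(1) by linarith
  show "Phi s (Psi s y) = y" unfolding Pe Phi_simp using cr[OF r0] sT ye by simp
  show "Psi s y \<in> Wd s" unfolding Pe Wd_simp using cr[OF r0] sT V by simp
qed

lemma Phi_in_Vd: assumes s: "s * s = 1" and p: "p \<in> Wd s" shows "Phi s p \<in> Vd"
proof -
  obtain a b c d e f where pe: "p = (a,b,c,d,e,f)" by (cases p) auto
  have W: "0 < (a - d)^2 + (f - c)^2" "0 < s * tr6 a b c d e f" "0 < (sg6 a b c d e f)^2 + (kp6 a b c d e f)^2"
    using p pe Wd_simp by auto
  show ?thesis unfolding pe Phi_simp Vd_simp using W by simp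
qed

lemma Phi_image: assumes s: "s * s = 1" shows "Phi s ` Wd s = Vd"
proof
  show "Phi s ` Wd s \<subseteq> Vd" using Phi_in_Vd[OF s] by auto
  show "Vd \<subseteq> Phi s ` Wd s"
  proof
    fix y assume y: "y \<in> Vd"
    show "y \<in> Phi s ` Wd s" using Phi_Psi[OF s y] by (metis image_eqI)
  qed
qed

lemma Psi_in_Ms: assumes s: "s * s = 1" and y: "y \<in> Vd" and sl: "y \<in> Sl" shows "Psi s y \<in> Ms s"
proof -
  obtain y1 y2 y3 y4 y5 y6 where ye: "y = (y1,y2,y3,y4,y5,y6)" by (cases y) auto
  have V: "0 < y1^2 + y2^2" "0 < y4^2 + y5^2" "0 < y3 + sqrt (y4^2 + y5^2)" using y ye Vd_simp by auto
  have y30: "y3 = 0" using sl ye unfolding Sl_def by simp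
  define T where "T = s * (y3 + sqrt (y4^2 + y5^2))"
  have sT: "s * T = y3 + sqrt (y4^2 + y5^2)" unfolding T_def using s by (simp add: mult.assoc[symmetric])
  have T0: "T \<noteq> 0" using sT V(3) by auto
  have T2: "T^2 = y4^2 + y5^2"
  proof -
    have "T^2 = (s * s) * (sqrt (y4^2 + y5^2))^2" unfolding T_def y30 by (simp add: power2_eq_square ac_simps)
    also have "\<dots> = y4^2 + y5^2" using s V(2) by simp
    finally show ?thesis .
  qed
  obtain a b c d e f where re: "rec6 y1 y2 T y4 y5 y6 = (a,b,c,d,e,f)" by (cases "rec6 y1 y2 T y4 y5 y6") auto
  have Pe: "Psi s y = (a,b,c,d,e,f)" unfolding ye Psi_simp T_def[symmetric] re ..
  have r0: "y1^2 + y2^2 \<noteq> 0" using V(1) by linarith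
  note cr = coords_rec[OF r0 T0 re]
  show ?thesis unfolding Pe Ms_simp using cr sT V T2 by simp
qed

lemma Phi_slice: assumes s: "s * s = 1" shows "Phi s ` (Ms s \<inter> Wd s) = Vd \<inter> Sl"
proof
  show "Phi s ` (Ms s \<inter> Wd s) \<subseteq> Vd \<inter> Sl"
  proof
    fix y assume "y \<in> Phi s ` (Ms s \<inter> Wd s)"
    then obtain p where p: "p \<in> Ms s" "p \<in> Wd s" and yp: "y = Phi s p" by auto
    obtain a b c d e f where pe: "p = (a,b,c,d,e,f)" by (cases p) auto
    have M: "(tr6 a b c d e f)^2 = (sg6 a b c d e f)^2 + (kp6 a b c d e f)^2" "s * tr6 a b c d e f > 0"
      using p pe Ms_simp by auto
    have "sqrt ((sg6 a b c d e f)^2 + (kp6 a b c d e f)^2) = s * tr6 a b c d e f"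
      unfolding M(1)[symmetric] using sabs[OF s M(2)] .
    hence "y \<in> Sl" unfolding yp pe Phi_simp Sl_def by simp
    moreover have "y \<in> Vd" using Phi_in_Vd[OF s p(2)] yp by simp
    ultimately show "y \<in> Vd \<inter> Sl" by simp
  qed
  show "Vd \<inter> Sl \<subseteq> Phi s ` (Ms s \<inter> Wd s)"
  proof
    fix y assume y: "y \<in> Vd \<inter> Sl"
    have "Psi s y \<in> Ms s \<inter> Wd s" using Psi_in_Ms[OF s] Phi_Psi(2)[OF s] y by auto
    moreover have "y = Phi s (Psi s y)" using Phi_Psi(1)[OF s] y by auto
    ultimately show "y \<in> Phi s ` (Ms s \<inter> Wd s)" by blast
  qed
qed



lemmas sm_intros = sm_Pair sm_add sm_diff sm_mult sm_divide sm_sqrt sm_power2 sm_fst sm_snd sm_id sm_const sm_minus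
  sm_exp sm_ln sm_Complex sm_Re sm_Im

lemma sm_Phi: "sm (Wd s) (Phi s)"
proof -
  have "sm (Wd s) (\<lambda>p. Phi s p)"
    unfolding Phi_def tr6_def sg6_def kp6_def al6_def
    apply (intro sm_intros)
    apply (simp_all add: open_Wd)
    apply (simp add: Wd_def tr6_def sg6_def kp6_def)
    done
  then show ?thesis by simp
qed

lemma sm_Psi: assumes s: "s \<noteq> 0" shows "sm Vd (Psi s)"
proof -
  have "sm Vd (\<lambda>p. Psi s p)"
    unfolding Psi_def rec6_def rA1_def rA2_def rB1_def rB2_def rBp_def
    apply (intro sm_intros)
    apply (simp_all add: open_Vd)
    using s by (auto simp: Vd_def add_pos_pos)
  then show ?thesis by simp
qed



type_synonym Z5 = "complex \<times> complex \<times> real \<times> real \<times> real"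

definition kk :: "R6 \<Rightarrow> Z5" where
  "kk y = (Complex (pr1 y / sqrt ((pr1 y)^2 + (pr2 y)^2)) (pr2 y / sqrt ((pr1 y)^2 + (pr2 y)^2)),
           Complex (pr4 y / sqrt ((pr4 y)^2 + (pr5 y)^2)) (pr5 y / sqrt ((pr4 y)^2 + (pr5 y)^2)),
           ln ((pr1 y)^2 + (pr2 y)^2), ln ((pr4 y)^2 + (pr5 y)^2), pr6 y)"

definition hh :: "Z5 \<Rightarrow> R6" where
  "hh z = (exp (fst (snd (snd z)) / 2) * Re (fst z), exp (fst (snd (snd z)) / 2) * Im (fst z), 0,
           exp (fst (snd (snd (snd z))) / 2) * Re (fst (snd z)), exp (fst (snd (snd (snd z))) / 2) * Im (fst (snd z)),
           snd (snd (snd (snd z))))"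

definition Uz :: "Z5 set" where "Uz = (-{0}) \<times> (-{0}) \<times> UNIV"

lemma open_Uz: "open Uz" unfolding Uz_def by (intro open_Times open_Compl) auto

lemma kk_simp: "kk (y1,y2,y3,y4,y5,y6) = (Complex (y1 / sqrt (y1^2 + y2^2)) (y2 / sqrt (y1^2 + y2^2)),
           Complex (y4 / sqrt (y4^2 + y5^2)) (y5 / sqrt (y4^2 + y5^2)), ln (y1^2 + y2^2), ln (y4^2 + y5^2), y6)"
  by (simp add: kk_def)

lemma hh_simp: "hh (z1,z2,t1,t2,t3) = (exp (t1/2) * Re z1, exp (t1/2) * Im z1, 0, exp (t2/2) * Re z2, exp (t2/2) * Im z2, t3)"
  by (simp add: hh_def)

lemma sm_kk: "sm Vd kk"
proof -
  have "sm Vd (\<lambda>y. kk y)"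
    unfolding kk_def
    apply (intro sm_intros)
    apply (simp_all add: open_Vd)
    by (auto simp: Vd_def)
  then show ?thesis by simp
qed

lemma sm_hh: "sm Uz hh"
proof -
  have "sm Uz (\<lambda>y. hh y)"
    unfolding hh_def
    apply (intro sm_intros)
    apply (simp_all add: open_Uz)
    done
  then show ?thesis by simp
qed

lemma exp_half_sq: "(exp (t/2))^2 = exp (t::real)"
  by (simp add: power2_eq_square exp_add[symmetric])

lemma sqrt_exp: "sqrt (exp t) = exp ((t::real)/2)"
  by (rule real_sqrt_unique) (simp_all add: exp_half_sq)

lemma exp_ln_half: "0 < x \<Longrightarrow> exp (ln x / 2) = sqrt x"
  using ln_sqrt[of x] by (metis exp_ln less_eq_real_def real_sqrt_gt_zero)

lemma unit_norm: assumes "0 < y1^2 + y2^2"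
  shows "cmod (Complex (y1 / sqrt (y1^2 + y2^2)) (y2 / sqrt (y1^2 + y2^2))) = 1"
proof -
  define r where "r = y1^2 + y2^2"
  have r: "0 < r" using assms r_def by simp
  have q: "(sqrt r)^2 = r" using r by simp
  have "(y1 / sqrt r)^2 + (y2 / sqrt r)^2 = y1^2 / r + y2^2 / r" by (simp add: power_divide q)
  also have "\<dots> = r / r" unfolding r_def by (simp only: add_divide_distrib)
  also have "\<dots> = 1" using r by simp
  finally have "(y1 / sqrt r)^2 + (y2 / sqrt r)^2 = 1" .
  then show ?thesis unfolding r_def[symmetric] by (simp add: complex_norm)
qed

lemma kk_in: assumes "y \<in> Vd" shows "kk y \<in> torus_times_R3"
proof -
  obtain y1 y2 y3 y4 y5 y6 where ye: "y = (y1,y2,y3,y4,y5,y6)" by (cases y) auto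
  have V: "0 < y1^2 + y2^2" "0 < y4^2 + y5^2" using assms ye Vd_simp by auto
  show ?thesis unfolding ye kk_simp torus_times_R3_def using unit_norm[OF V(1)] unit_norm[OF V(2)] by simp
qed

lemma hh_kk: assumes "y \<in> Vd" "y \<in> Sl" shows "hh (kk y) = y"
proof -
  obtain y1 y2 y3 y4 y5 y6 where ye: "y = (y1,y2,y3,y4,y5,y6)" by (cases y) auto
  have V: "0 < y1^2 + y2^2" "0 < y4^2 + y5^2" using assms ye Vd_simp by auto
  have y3: "y3 = 0" using assms(2) ye unfolding Sl_def by simp
  have s1: "sqrt (y1^2 + y2^2) > 0" "sqrt (y4^2 + y5^2) > 0" using V by simp_all
  show ?thesis unfolding ye kk_simp hh_simp using exp_ln_half[OF V(1)] exp_ln_half[OF V(2)] s1 y3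
    by simp
qed

lemma hh_in: assumes "z \<in> torus_times_R3" shows "hh z \<in> Vd" "hh z \<in> Sl"
proof -
  obtain z1 z2 t1 t2 t3 where ze: "z = (z1,z2,t1,t2,t3)" by (cases z) auto
  have n: "cmod z1 = 1" "cmod z2 = 1" using assms ze unfolding torus_times_R3_def by auto
  have r1: "(Re z1)^2 + (Im z1)^2 = 1" "(Re z2)^2 + (Im z2)^2 = 1" using n cmod_power2 by (metis one_power2)+
  have e1: "(exp (t1/2) * Re z1)^2 + (exp (t1/2) * Im z1)^2 = exp t1"
    using r1(1) by (simp add: power_mult_distrib exp_half_sq distrib_left[symmetric])
  have e2: "(exp (t2/2) * Re z2)^2 + (exp (t2/2) * Im z2)^2 = exp t2"
    using r1(2) by (simp add: power_mult_distrib exp_half_sq distrib_left[symmetric])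
  show "hh z \<in> Vd" unfolding ze hh_simp Vd_simp e1 e2 by simp
  show "hh z \<in> Sl" unfolding ze hh_simp Sl_def by simp
qed

lemma kk_hh: assumes "z \<in> torus_times_R3" shows "kk (hh z) = z"
proof -
  obtain z1 z2 t1 t2 t3 where ze: "z = (z1,z2,t1,t2,t3)" by (cases z) auto
  have n: "cmod z1 = 1" "cmod z2 = 1" using assms ze unfolding torus_times_R3_def by auto
  have r1: "(Re z1)^2 + (Im z1)^2 = 1" "(Re z2)^2 + (Im z2)^2 = 1" using n cmod_power2 by (metis one_power2)+
  have e1: "(exp (t1/2) * Re z1)^2 + (exp (t1/2) * Im z1)^2 = exp t1"
    using r1(1) by (simp add: power_mult_distrib exp_half_sq distrib_left[symmetric])
  have e2: "(exp (t2/2) * Re z2)^2 + (exp (t2/2) * Im z2)^2 = exp t2"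
    using r1(2) by (simp add: power_mult_distrib exp_half_sq distrib_left[symmetric])
  show ?thesis unfolding ze hh_simp kk_simp e1 e2 sqrt_exp
    by (simp add: complex_surj)
qed

lemma hh_Uz: "z \<in> torus_times_R3 \<Longrightarrow> z \<in> Uz"
  unfolding torus_times_R3_def Uz_def by auto

lemma sub_gen: assumes s: "s * s = 1" shows "smooth_submanifold (Ms s)"
  unfolding smooth_submanifold_def
proof
  fix p assume p: "p \<in> Ms s"
  have s0: "s \<noteq> 0" using s by auto
  show "\<exists>U V (\<phi>::R6 \<Rightarrow> R6) \<psi> S. open U \<and> p \<in> U \<and> open V \<and> subspace S \<and>
      smooth_on U \<phi> \<and> smooth_on V \<psi> \<and> \<phi> ` U = V \<and>
      (\<forall>x\<in>U. \<psi> (\<phi> x) = x) \<and> (\<forall>y\<in>V. \<phi> (\<psi> y) = y) \<and>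
      \<phi> ` (Ms s \<inter> U) = V \<inter> S"
    apply (rule exI[of _ "Wd s"], rule exI[of _ Vd], rule exI[of _ "Phi s"], rule exI[of _ "Psi s"], rule exI[of _ Sl])
    using open_Wd open_Vd subspace_Sl Ms_sub_Wd[OF s] p sm_Phi[of s] sm_Psi[OF s0] Phi_image[OF s]
      Psi_Phi[OF s] Phi_Psi(1)[OF s] Phi_slice[OF s]
    by (auto simp: smooth_on_sm)
qed

lemma diffeo_gen: assumes s: "s * s = 1" shows "diffeomorphic (Ms s) torus_times_R3"
  unfolding diffeomorphic_def
proof (intro exI conjI)
  have s0: "s \<noteq> 0" using s by auto
  have smF: "sm (Wd s) (\<lambda>p. kk (Phi s p))"
    by (rule sm_comp[OF sm_kk sm_Phi]) (rule Phi_in_Vd[OF s])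
  show "smooth_map_on (Ms s) (\<lambda>p. kk (Phi s p))"
    unfolding smooth_map_on_def smooth_on_sm
    using smF open_Wd Ms_sub_Wd[OF s] by blast
  have smG: "sm Uz (\<lambda>z. Psi s (hh z))"
  proof (rule sm_comp[OF sm_Psi[OF s0] sm_hh])
    fix z assume z: "z \<in> Uz"
    obtain z1 z2 t1 t2 t3 where ze: "z = (z1,z2,t1,t2,t3)" by (cases z) auto
    have nz: "z1 \<noteq> 0" "z2 \<noteq> 0" using z ze Uz_def by auto
    have "0 < (cmod z1)^2" "0 < (cmod z2)^2" using nz by simp_all
    hence "0 < (Re z1)^2 + (Im z1)^2" "0 < (Re z2)^2 + (Im z2)^2" unfolding cmod_power2 by simp_all
    then show "hh z \<in> Vd" unfolding ze hh_simp Vd_simp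
      by (simp add: power_mult_distrib exp_half_sq distrib_left[symmetric])
  qed
  show "smooth_map_on torus_times_R3 (\<lambda>z. Psi s (hh z))"
    unfolding smooth_map_on_def smooth_on_sm
    using smG open_Uz hh_Uz by blast
  show "\<forall>x\<in>Ms s. kk (Phi s x) \<in> torus_times_R3 \<and> Psi s (hh (kk (Phi s x))) = x"
  proof
    fix x assume x: "x \<in> Ms s"
    have xW: "x \<in> Wd s" using x Ms_sub_Wd[OF s] by auto
    have yV: "Phi s x \<in> Vd" using Phi_in_Vd[OF s xW] .
    have ySl: "Phi s x \<in> Sl" using Phi_slice[OF s] x xW by auto
    show "kk (Phi s x) \<in> torus_times_R3 \<and> Psi s (hh (kk (Phi s x))) = x"
      using kk_in[OF yV] hh_kk[OF yV ySl] Psi_Phi[OF s xW] by simp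
  qed
  show "\<forall>y\<in>torus_times_R3. Psi s (hh y) \<in> Ms s \<and> kk (Phi s (Psi s (hh y))) = y"
  proof
    fix z assume z: "z \<in> torus_times_R3"
    have V: "hh z \<in> Vd" and S: "hh z \<in> Sl" using hh_in[OF z] by auto
    show "Psi s (hh z) \<in> Ms s \<and> kk (Phi s (Psi s (hh z))) = z"
      using Psi_in_Ms[OF s V S] Phi_Psi(1)[OF s V] kk_hh[OF z] by simp
  qed
qed

theorem theorem1p2:
  shows "smooth_submanifold A1plus \<and> diffeomorphic A1plus torus_times_R3 \<and>
         smooth_submanifold A1minus \<and> diffeomorphic A1minus torus_times_R3"
  unfolding A1plus_Ms A1minus_Ms
  using sub_gen[of 1] sub_gen[of "-1"] diffeo_gen[of 1] diffeo_gen[of "-1"] by simp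


end
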